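(* Let $T$ be a first-order theory over a function-free vocabulary $\Sigma$, let $O$ be a propagator for $T$, and let $D$ be a finite set. Let $\mathcal{K}$ be the class of CSPs of the form $\langle \{C_T\}, V_{\tilde I}, \mathit{dom}_{\tilde I}\rangle$ where $\tilde I$ ranges over four-valued $\Sigma$-structures with domain $D$. Then the operator $f$ on $\mathcal{K}$ defined by $f(\langle \{C_T\}, V_{\tilde I}, \mathit{dom}_{\tilde I}\rangle) = \langle \{C_T\}, V_{\tilde I}, \mathit{dom}_{O(\tilde I)}\rangle$ is a domain reducing propagator.
   Context: Vocabularies are finite sets of predicate symbols with arities. Truth values: $\mathbf{t}$ (true), $\mathbf{f}$ (false), $\mathbf{u}$ (unknown), $\mathbf{i}$ (inconsistent). The precision order $\le_p$ on truth values: $\mathbf{u} \le_p \mathbf{t} \le_p \mathbf{i}$ and $\mathbf{u} \le_p \mathbf{f} \le_p \mathbf{i}$, with $\mathbf{t},\mathbf{f}$ incomparable. A four-valued $\Sigma$-structure $\tilde I$ consists of a domain $D$ and, for each $P/n \in \Sigma$, a function $P^{\tilde I}: D^n \to \{\mathbf{t},\mathbf{f},\mathbf{u},\mathbf{i}\}$; it is two-valued if it only uses $\mathbf{t},\mathbf{f}$, and two-valued structures are identified with ordinary first-order structures ($\overline{d} \in P^I$ iff $P^I(\overline{d})=\mathbf{t}$). For structures with the same domain, $\tilde I \le_p \tilde J$ iff $P^{\tilde I}(\overline{d}) \le_p P^{\tilde J}(\overline{d})$ for all $P,\overline{d}$. A propagator for a theory $T$ over $\Sigma$ is a map $O$ from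 four-valued $\Sigma$-structures to four-valued $\Sigma$-structures such that (i) $\tilde I \le_p O(\tilde I)$ for every $\tilde I$ (in particular $O(\tilde I)$ has the same domain), and (ii) for every two-valued model $M$ of $T$ with $\tilde I \le_p M$, also $O(\tilde I) \le_p M$. CSPs: a constraint on a sequence of variables $(v_1,\dots,v_n)$ is a set of $n$-tuples. A CSP is a tuple $\langle \mathcal{C}, V, \mathit{dom}\rangle$ with $V$ a set of (constraint) variables, $\mathit{dom}$ mapping each variable to a domain, and $\mathcal{C}$ a set of constraints on finite sequences of variables from $V$. A solution is a map $d$ with $d(v)\in\mathit{dom}(v)$ for all $v\in V$ and $(d(v_1),\dots,d(v_n))\in C$ for every constraint $C\in\mathcal{C}$ on $(v_1,\dots,v_n)$. Two CSPs with the same variables are equivalent if they have the same solutions. A (CSP) propagator is a function mapping CSPs to equivalent CSPs; it is domain reducing if it keeps the set of constraints unchanged and satisfies $\mathit{dom}_2(v)\subseteq \mathit{dom}_1(v)$ for all $v$, where $\mathit{dom}_1,\mathit{dom}_2$ are the domain maps of input and output. CSP of $\langle T,\tilde I\rangle$ for finite $\tilde I$ with domain $D$: $V_{\tilde I}$ is the set of all domain atoms $P(\overline{d})$ with $P/n\in\Sigma$, $\overline{d}\in D^n$, with a fixed total order (the $i$th domain atom). $\mathit{dom}_{\tilde I}(P(\overline{d}))$ is $\{\mathbf{t},\mathbf{f}\}$, $\{\mathbf{t}\}$, $\{\mathbf{f}\}$, $\emptyset$ according as $P^{\tilde I}(\overline{d})$ is $\mathbf{u},\mathbf{t},\mathbf{f},\mathbf{i}$.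 For $\overline{\tau}\in\{\mathbf{t},\mathbf{f}\}^{|V_{\tilde I}|}$, $I_{\overline{\tau}}$ is the two-valued $\Sigma$-structure with domain $D$ in which the $i$th domain atom is true iff the $i$th entry of $\overline{\tau}$ is $\mathbf{t}$. $C_T$ is the constraint on the whole sequence of domain atoms consisting of all $\overline{\tau}$ with $I_{\overline{\tau}}\models T$. *)

theory Defs
  imports Main
begin

datatype tv = TT | FF | UU | II   (* true, false, unknown, inconsistent *)

definition leq_p :: "tv \<Rightarrow> tv \<Rightarrow> bool" where
  "leq_p a b \<longleftrightarrow> a = b \<or> a = UU \<or> b = II"

text \<open>Function-free: terms are variables only (no function or constant symbols).\<close>
datatype 'p fm = Atom 'p "nat list" | Eq nat nat | Neg "'p fm" | Conj "'p fm" "'p fm" | Ex nat "'p fm"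

fun sat :: "('p \<Rightarrow> 'd list \<Rightarrow> bool) \<Rightarrow> 'd set \<Rightarrow> (nat \<Rightarrow> 'd) \<Rightarrow> 'p fm \<Rightarrow> bool" where
  "sat I D e (Atom P xs) = I P (map e xs)"
| "sat I D e (Eq x y) = (e x = e y)"
| "sat I D e (Neg \<phi>) = (\<not> sat I D e \<phi>)"
| "sat I D e (Conj \<phi> \<psi>) = (sat I D e \<phi> \<and> sat I D e \<psi>)"
| "sat I D e (Ex x \<phi>) = (\<exists>d\<in>D. sat I D (e(x := d)) \<phi>)"

fun fv :: "'p fm \<Rightarrow> nat set" where
  "fv (Atom P xs) = set xs"
| "fv (Eq x y) = {x, y}"
| "fv (Neg \<phi>) = fv \<phi>"
| "fv (Conj \<phi> \<psi>) = fv \<phi> \<union> fv \<psi>"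
| "fv (Ex x \<phi>) = fv \<phi> - {x}"

fun over_voc :: "'p set \<Rightarrow> ('p \<Rightarrow> nat) \<Rightarrow> 'p fm \<Rightarrow> bool" where
  "over_voc S ar (Atom P xs) = (P \<in> S \<and> length xs = ar P)"
| "over_voc S ar (Eq x y) = True"
| "over_voc S ar (Neg \<phi>) = over_voc S ar \<phi>"
| "over_voc S ar (Conj \<phi> \<psi>) = (over_voc S ar \<phi> \<and> over_voc S ar \<psi>)"
| "over_voc S ar (Ex x \<phi>) = over_voc S ar \<phi>"

definition theory_over :: "'p set \<Rightarrow> ('p \<Rightarrow> nat) \<Rightarrow> 'p fm set \<Rightarrow> bool" where
  "theory_over S ar T \<longleftrightarrow> (\<forall>\<phi>\<in>T. fv \<phi> = {} \<and> over_voc S ar \<phi>)"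

definition models :: "'d set \<Rightarrow> ('p \<Rightarrow> 'd list \<Rightarrow> bool) \<Rightarrow> 'p fm set \<Rightarrow> bool" where
  "models D I T \<longleftrightarrow> (\<forall>\<phi>\<in>T. \<forall>e. range e \<subseteq> D \<longrightarrow> sat I D e \<phi>)"

definition dom_atoms :: "'p set \<Rightarrow> ('p \<Rightarrow> nat) \<Rightarrow> 'd set \<Rightarrow> ('p \<times> 'd list) set" where
  "dom_atoms S ar D = {(P, ds). P \<in> S \<and> length ds = ar P \<and> set ds \<subseteq> D}"

type_synonym ('p, 'd) struct4 = "'d set \<times> ('p \<Rightarrow> 'd list \<Rightarrow> tv)"

text \<open>The interpretation function is canonically UU outside the domain atoms, so that
  a structure is determined by its domain and its values on domain atoms.\<close>
definition is_struct4 :: "'p set \<Rightarrow> ('p \<Rightarrow> nat) \<Rightarrow> ('p, 'd) struct4 \<Rightarrow> bool" where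
  "is_struct4 S ar A \<longleftrightarrow> fst A \<noteq> {} \<and>
     (\<forall>P ds. (P, ds) \<notin> dom_atoms S ar (fst A) \<longrightarrow> snd A P ds = UU)"

definition two_valued :: "'p set \<Rightarrow> ('p \<Rightarrow> nat) \<Rightarrow> ('p, 'd) struct4 \<Rightarrow> bool" where
  "two_valued S ar A \<longleftrightarrow>
     (\<forall>(P, ds) \<in> dom_atoms S ar (fst A). snd A P ds \<in> {TT, FF})"

definition leq_p_struct :: "'p set \<Rightarrow> ('p \<Rightarrow> nat) \<Rightarrow> ('p, 'd) struct4 \<Rightarrow> ('p, 'd) struct4 \<Rightarrow> bool" where
  "leq_p_struct S ar A B \<longleftrightarrow> fst A = fst B \<and>
     (\<forall>(P, ds) \<in> dom_atoms S ar (fst A). leq_p (snd A P ds) (snd B P ds))"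

definition is_model4 :: "'p set \<Rightarrow> ('p \<Rightarrow> nat) \<Rightarrow> 'p fm set \<Rightarrow> ('p, 'd) struct4 \<Rightarrow> bool" where
  "is_model4 S ar T M \<longleftrightarrow> is_struct4 S ar M \<and> two_valued S ar M \<and>
     models (fst M) (\<lambda>P ds. snd M P ds = TT) T"

definition propagator :: "'p set \<Rightarrow> ('p \<Rightarrow> nat) \<Rightarrow> 'p fm set \<Rightarrow>
    (('p, 'd) struct4 \<Rightarrow> ('p, 'd) struct4) \<Rightarrow> bool" where
  "propagator S ar T Op \<longleftrightarrow> (\<forall>A. is_struct4 S ar A \<longrightarrow>
      is_struct4 S ar (Op A) \<and> leq_p_struct S ar A (Op A) \<and>
      (\<forall>M. is_model4 S ar T M \<and> leq_p_struct S ar A M \<longrightarrow> leq_p_struct S ar (Op A) M))"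

text \<open>A CSP: set of constraints (variable sequence, set of tuples), set of variables, domain map.\<close>
type_synonym ('v, 'a) csp = "('v list \<times> 'a list set) set \<times> 'v set \<times> ('v \<Rightarrow> 'a set)"

definition csp_cons :: "('v, 'a) csp \<Rightarrow> ('v list \<times> 'a list set) set" where "csp_cons X = fst X"
definition csp_vars :: "('v, 'a) csp \<Rightarrow> 'v set" where "csp_vars X = fst (snd X)"
definition csp_dom :: "('v, 'a) csp \<Rightarrow> 'v \<Rightarrow> 'a set" where "csp_dom X = snd (snd X)"

definition csp_solutions :: "('v, 'a) csp \<Rightarrow> ('v \<Rightarrow> 'a) set" where
  "csp_solutions X = {d. (\<forall>v\<in>csp_vars X. d v \<in> csp_dom X v) \<and>
      (\<forall>(vs, C)\<in>csp_cons X. map d vs \<in> C)}"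

definition csp_equiv :: "('v, 'a) csp \<Rightarrow> ('v, 'a) csp \<Rightarrow> bool" where
  "csp_equiv X Y \<longleftrightarrow> csp_vars X = csp_vars Y \<and> csp_solutions X = csp_solutions Y"

definition domain_reducing_propagator_on :: "('v, 'a) csp set \<Rightarrow> (('v, 'a) csp \<Rightarrow> ('v, 'a) csp) \<Rightarrow> bool" where
  "domain_reducing_propagator_on K f \<longleftrightarrow> (\<forall>X\<in>K. csp_equiv X (f X) \<and>
      csp_cons (f X) = csp_cons X \<and> (\<forall>v\<in>csp_vars X. csp_dom (f X) v \<subseteq> csp_dom X v))"

text \<open>ord is the fixed enumeration (total order) of the domain atoms.\<close>
definition I_tau :: "('p \<times> 'd list) list \<Rightarrow> tv list \<Rightarrow> 'p \<Rightarrow> 'd list \<Rightarrow> bool" where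
  "I_tau ord \<tau> P ds \<longleftrightarrow> (\<exists>i<length ord. ord ! i = (P, ds) \<and> \<tau> ! i = TT)"

definition C_T :: "'d set \<Rightarrow> ('p \<times> 'd list) list \<Rightarrow> 'p fm set \<Rightarrow> tv list set" where
  "C_T D ord T = {\<tau>. length \<tau> = length ord \<and> set \<tau> \<subseteq> {TT, FF} \<and> models D (I_tau ord \<tau>) T}"

definition dom_of :: "tv \<Rightarrow> tv set" where
  "dom_of v = (case v of UU \<Rightarrow> {TT, FF} | TT \<Rightarrow> {TT} | FF \<Rightarrow> {FF} | II \<Rightarrow> {})"

definition csp_of :: "'p set \<Rightarrow> ('p \<Rightarrow> nat) \<Rightarrow> ('p \<times> 'd list) list \<Rightarrow> 'p fm set \<Rightarrow>
    ('p, 'd) struct4 \<Rightarrow> ('p \<times> 'd list, tv) csp" where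
  "csp_of S ar ord T A = ({(ord, C_T (fst A) ord T)}, dom_atoms S ar (fst A),
      (\<lambda>(P, ds). dom_of (snd A P ds)))"

definition csp_class :: "'p set \<Rightarrow> ('p \<Rightarrow> nat) \<Rightarrow> ('p \<times> 'd list) list \<Rightarrow> 'p fm set \<Rightarrow>
    'd set \<Rightarrow> ('p \<times> 'd list, tv) csp set" where
  "csp_class S ar ord T D = {csp_of S ar ord T A | A. is_struct4 S ar A \<and> fst A = D}"

definition f_op :: "'p set \<Rightarrow> ('p \<Rightarrow> nat) \<Rightarrow> ('p \<times> 'd list) list \<Rightarrow> 'p fm set \<Rightarrow> 'd set \<Rightarrow>
    (('p, 'd) struct4 \<Rightarrow> ('p, 'd) struct4) \<Rightarrow> ('p \<times> 'd list, tv) csp \<Rightarrow> ('p \<times> 'd list, tv) csp" where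
  "f_op S ar ord T D Op X = csp_of S ar ord T
      (Op (SOME A. is_struct4 S ar A \<and> fst A = D \<and> csp_of S ar ord T A = X))"

end

theory Submission
  imports Defs
begin

lemma dom_of_inj: "dom_of a = dom_of b \<Longrightarrow> a = b"
  by (cases a; cases b; simp add: dom_of_def)

lemma csp_of_inj:
  assumes "is_struct4 S ar A" "is_struct4 S ar B" "fst A = fst B"
    "csp_of S ar ord T A = csp_of S ar ord T B"
  shows "A = B"
proof -
  have "\<And>P ds. dom_of (snd A P ds) = dom_of (snd B P ds)"
    using assms(4) unfolding csp_of_def by (metis (no_types, lifting) case_prod_conv prod.inject)
  hence "snd A = snd B" using dom_of_inj by blast
  thus ?thesis using assms(3) by (simp add: prod_eq_iff)
qed

lemma leq_dom: "leq_p a b \<Longrightarrow> dom_of b \<subseteq> dom_of a"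
  by (cases a; cases b; auto simp: leq_p_def dom_of_def)

lemma dom_leq: "x \<in> dom_of a \<Longrightarrow> leq_p a x"
  by (cases a; cases x; auto simp: leq_p_def dom_of_def)

lemma leq_dom2: "leq_p a x \<Longrightarrow> x \<in> {TT, FF} \<Longrightarrow> x \<in> dom_of a"
  by (cases a; cases x; auto simp: leq_p_def dom_of_def)

lemma dom_of_sub: "dom_of a \<subseteq> {TT, FF}"
  by (cases a; auto simp: dom_of_def)

theorem proposition3p1:
  fixes S :: "'p set" and ar :: "'p \<Rightarrow> nat" and T :: "'p fm set"
    and Op :: "('p, 'd) struct4 \<Rightarrow> ('p, 'd) struct4"
    and D :: "'d set" and ord :: "('p \<times> 'd list) list"
  assumes "finite S"
    and "theory_over S ar T"
    and hprop: "propagator S ar T Op"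
    and "finite D"
    and "distinct ord" and ordset: "set ord = dom_atoms S ar D"
  shows "(\<forall>A. is_struct4 S ar A \<and> fst A = D \<longrightarrow>
            f_op S ar ord T D Op (csp_of S ar ord T A) = csp_of S ar ord T (Op A))
       \<and> domain_reducing_propagator_on (csp_class S ar ord T D) (f_op S ar ord T D Op)"
proof -
  have P1: "f_op S ar ord T D Op (csp_of S ar ord T A) = csp_of S ar ord T (Op A)"
    if A: "is_struct4 S ar A" "fst A = D" for A
  proof -
    define A' where "A' = (SOME A'. is_struct4 S ar A' \<and> fst A' = D \<and> csp_of S ar ord T A' = csp_of S ar ord T A)"
    have "is_struct4 S ar A' \<and> fst A' = D \<and> csp_of S ar ord T A' = csp_of S ar ord T A"
      unfolding A'_def by (rule someI[of _ A]) (use A in auto)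
    hence "A' = A" using csp_of_inj A by metis
    thus ?thesis unfolding f_op_def A'_def[symmetric] by simp
  qed
  have P2: "csp_equiv (csp_of S ar ord T A) (csp_of S ar ord T (Op A)) \<and>
      csp_cons (csp_of S ar ord T (Op A)) = csp_cons (csp_of S ar ord T A) \<and>
      (\<forall>v\<in>csp_vars (csp_of S ar ord T A). csp_dom (csp_of S ar ord T (Op A)) v \<subseteq> csp_dom (csp_of S ar ord T A) v)"
    if A: "is_struct4 S ar A" "fst A = D" for A
  proof -
    have OA: "is_struct4 S ar (Op A)" "leq_p_struct S ar A (Op A)"
      and OM: "\<And>M. is_model4 S ar T M \<Longrightarrow> leq_p_struct S ar A M \<Longrightarrow> leq_p_struct S ar (Op A) M"
      using hprop A(1) unfolding propagator_def by blast+
    have fOA: "fst (Op A) = D" using OA(2) A(2) unfolding leq_p_struct_def by simp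
    have red: "\<forall>v\<in>dom_atoms S ar D. dom_of (snd (Op A) (fst v) (snd v)) \<subseteq> dom_of (snd A (fst v) (snd v))"
      using OA(2) A(2) leq_dom unfolding leq_p_struct_def by fastforce
    have sol: "csp_solutions (csp_of S ar ord T A) = csp_solutions (csp_of S ar ord T (Op A))"
    proof
      show "csp_solutions (csp_of S ar ord T (Op A)) \<subseteq> csp_solutions (csp_of S ar ord T A)"
        using red fOA A(2) unfolding csp_solutions_def csp_of_def csp_vars_def csp_dom_def csp_cons_def
        by fastforce
    next
      show "csp_solutions (csp_of S ar ord T A) \<subseteq> csp_solutions (csp_of S ar ord T (Op A))"
      proof
        fix d assume "d \<in> csp_solutions (csp_of S ar ord T A)"
        hence dd: "\<And>P ds. (P, ds) \<in> dom_atoms S ar D \<Longrightarrow> d (P, ds) \<in> dom_of (snd A P ds)"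
          and dC: "map d ord \<in> C_T D ord T"
          using A(2) unfolding csp_solutions_def csp_of_def csp_vars_def csp_dom_def csp_cons_def
          by auto
        define M :: "('p,'d) struct4" where
          "M = (D, \<lambda>P ds. if (P, ds) \<in> dom_atoms S ar D then d (P, ds) else UU)"
        have tv: "\<And>P ds. (P, ds) \<in> dom_atoms S ar D \<Longrightarrow> d (P, ds) \<in> {TT, FF}"
          using dd dom_of_sub by blast
        have I: "I_tau ord (map d ord) = (\<lambda>P ds. snd M P ds = TT)"
        proof (intro ext)
          fix P ds
          have "I_tau ord (map d ord) P ds \<longleftrightarrow> (P, ds) \<in> set ord \<and> d (P, ds) = TT"
            unfolding I_tau_def by (auto simp: in_set_conv_nth)
          thus "I_tau ord (map d ord) P ds = (snd M P ds = TT)"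
            unfolding M_def ordset by simp
        qed
        have "is_model4 S ar T M"
          unfolding is_model4_def is_struct4_def two_valued_def
          using A dC tv unfolding M_def C_T_def is_struct4_def
          apply (intro conjI)
          subgoal by simp
          subgoal by simp
          subgoal by auto
          subgoal using I unfolding M_def C_T_def by simp
          done
        moreover have "leq_p_struct S ar A M"
          unfolding leq_p_struct_def M_def using A(2) dd dom_leq by auto
        ultimately have "leq_p_struct S ar (Op A) M" by (rule OM)
        hence "\<And>P ds. (P, ds) \<in> dom_atoms S ar D \<Longrightarrow> d (P, ds) \<in> dom_of (snd (Op A) P ds)"
          unfolding leq_p_struct_def M_def using fOA tv leq_dom2 by fastforce
        thus "d \<in> csp_solutions (csp_of S ar ord T (Op A))"
          using dC fOA unfolding csp_solutions_def csp_of_def csp_vars_def csp_dom_def csp_cons_def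
          by auto
      qed
    qed
    show ?thesis
    proof (intro conjI ballI)
      show "csp_equiv (csp_of S ar ord T A) (csp_of S ar ord T (Op A))"
        using sol fOA A(2) unfolding csp_equiv_def csp_of_def csp_vars_def by simp
      show "csp_cons (csp_of S ar ord T (Op A)) = csp_cons (csp_of S ar ord T A)"
        using fOA A(2) unfolding csp_of_def csp_cons_def by simp
    next
      fix v assume v: "v \<in> csp_vars (csp_of S ar ord T A)"
      obtain P ds where vv: "v = (P, ds)" by (cases v)
      have "v \<in> dom_atoms S ar D" using v A(2) unfolding csp_of_def csp_vars_def by simp
      hence "dom_of (snd (Op A) P ds) \<subseteq> dom_of (snd A P ds)" using red vv by fastforce
      thus "csp_dom (csp_of S ar ord T (Op A)) v \<subseteq> csp_dom (csp_of S ar ord T A) v"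
        unfolding csp_of_def csp_dom_def vv by simp
    qed
  qed
  show ?thesis
  proof (intro conjI allI impI)
    fix A assume "is_struct4 S ar A \<and> fst A = D"
    thus "f_op S ar ord T D Op (csp_of S ar ord T A) = csp_of S ar ord T (Op A)" using P1 by blast
  next
    show "domain_reducing_propagator_on (csp_class S ar ord T D) (f_op S ar ord T D Op)"
      unfolding domain_reducing_propagator_on_def
    proof
      fix X assume "X \<in> csp_class S ar ord T D"
      then obtain A where A: "is_struct4 S ar A" "fst A = D" and X: "X = csp_of S ar ord T A"
        unfolding csp_class_def by blast
      show "csp_equiv X (f_op S ar ord T D Op X) \<and> csp_cons (f_op S ar ord T D Op X) = csp_cons X \<and>
          (\<forall>v\<in>csp_vars X. csp_dom (f_op S ar ord T D Op X) v \<subseteq> csp_dom X v)"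
        unfolding X P1[OF A] by (rule P2[OF A])
    qed
  qed
qed

end
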